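(* Let $G = K_m \otimes K_n$ with $m \geq 3$ and $m \leq n \leq 2m-2$. Then $\dim(G) \geq \left\lceil \frac{2}{3}(m+n-2) \right\rceil$.
   Context: $K_r$ is the complete graph on $r$ vertices. The tensor product $G\otimes H$ has vertex set $V(G)\times V(H)$, with $(u,v)$ adjacent to $(x,y)$ iff $ux\in E(G)$ and $vy\in E(H)$. For a connected graph and an ordered set $W=\{w_1,\dots,w_k\}$ of vertices, $r(v\mid W)=(d(v,w_1),\dots,d(v,w_k))$; $W$ is resolving if distinct vertices have distinct representations; $\dim(G)$ is the minimum size of a resolving set. *)

theory Defs
  imports Complex_Main
begin

fun walk_len :: "'a set \<Rightarrow> ('a \<Rightarrow> 'a \<Rightarrow> bool) \<Rightarrow> nat \<Rightarrow> 'a \<Rightarrow> 'a \<Rightarrow> bool" where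
  "walk_len V E 0 u v = (u \<in> V \<and> u = v)"
| "walk_len V E (Suc k) u v = (u \<in> V \<and> (\<exists>w. E u w \<and> walk_len V E k w v))"

text \<open>Graph distance: length of a shortest walk (used only for connected graphs).\<close>
definition dist :: "'a set \<Rightarrow> ('a \<Rightarrow> 'a \<Rightarrow> bool) \<Rightarrow> 'a \<Rightarrow> 'a \<Rightarrow> nat" where
  "dist V E u v = (LEAST k. walk_len V E k u v)"

definition connected_graph :: "'a set \<Rightarrow> ('a \<Rightarrow> 'a \<Rightarrow> bool) \<Rightarrow> bool" where
  "connected_graph V E \<longleftrightarrow> (\<forall>u\<in>V. \<forall>v\<in>V. \<exists>k. walk_len V E k u v)"

definition resolving :: "'a set \<Rightarrow> ('a \<Rightarrow> 'a \<Rightarrow> bool) \<Rightarrow> 'a set \<Rightarrow> bool" where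
  "resolving V E W \<longleftrightarrow> W \<subseteq> V \<and>
     (\<forall>u\<in>V. \<forall>v\<in>V. (\<forall>w\<in>W. dist V E u w = dist V E v w) \<longrightarrow> u = v)"

definition metric_dim :: "'a set \<Rightarrow> ('a \<Rightarrow> 'a \<Rightarrow> bool) \<Rightarrow> nat" where
  "metric_dim V E = (LEAST k. \<exists>W. finite W \<and> card W = k \<and> resolving V E W)"

definition K_verts :: "nat \<Rightarrow> nat set" where "K_verts r = {0..<r}"
definition K_adj :: "nat \<Rightarrow> nat \<Rightarrow> bool" where "K_adj x y \<longleftrightarrow> x \<noteq> y"

definition tensor_verts :: "'a set \<Rightarrow> 'b set \<Rightarrow> ('a \<times> 'b) set" where
  "tensor_verts V1 V2 = V1 \<times> V2"
definition tensor_adj :: "('a \<Rightarrow> 'a \<Rightarrow> bool) \<Rightarrow> ('b \<Rightarrow> 'b \<Rightarrow> bool) \<Rightarrow> ('a \<times> 'b) \<Rightarrow> ('a \<times> 'b) \<Rightarrow> bool" where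
  "tensor_adj E1 E2 p q \<longleftrightarrow> E1 (fst p) (fst q) \<and> E2 (snd p) (snd q)"

end

theory Submission
  imports Defs
begin

lemma exists_other: "3 \<le> (m::nat) \<Longrightarrow> \<exists>c. c < m \<and> c \<noteq> a \<and> c \<noteq> a'"
  by presburger

lemma dist_eq:
  fixes m n :: nat
  assumes m3: "3 \<le> m" and n3: "3 \<le> n"
    and u: "u \<in> {0..<m}\<times>{0..<n}" and w: "w \<in> {0..<m}\<times>{0..<n}" and uw: "u \<noteq> w"
  shows "dist ({0..<m}\<times>{0..<n}) (tensor_adj K_adj K_adj) u w
         = (if fst u \<noteq> fst w \<and> snd u \<noteq> snd w then 1 else 2)"
proof -
  define V where "V = {0..<m}\<times>{0..<n}"
  define E where "E = tensor_adj K_adj K_adj"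
  have w1: "walk_len V E (Suc 0) u w \<longleftrightarrow> fst u \<noteq> fst w \<and> snd u \<noteq> snd w"
    using u w by (auto simp: V_def E_def tensor_adj_def K_adj_def)
  show ?thesis
  proof (cases "fst u \<noteq> fst w \<and> snd u \<noteq> snd w")
    case True
    have "dist V E u w = 1" unfolding dist_def
    proof (rule Least_equality)
      show "walk_len V E 1 u w" using w1 True by simp
      fix k assume "walk_len V E k u w"
      then show "1 \<le> k" using uw by (cases k) auto
    qed
    then show ?thesis using True by (simp add: V_def E_def)
  next
    case False
    obtain c where c: "c < m" "c \<noteq> fst u" "c \<noteq> fst w" using exists_other[OF m3] by blast
    obtain d where d: "d < n" "d \<noteq> snd u" "d \<noteq> snd w" using exists_other[OF n3] by blast
    have e1: "E u (c,d)" "E (c,d) w" "(c,d) \<in> V" "u \<in> V" "w \<in> V"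
      using u w c d by (auto simp: V_def E_def tensor_adj_def K_adj_def)
    have w2: "walk_len V E 2 u w"
      unfolding numeral_2_eq_2 walk_len.simps using e1 by blast
    have "dist V E u w = 2" unfolding dist_def
    proof (rule Least_equality)
      show "walk_len V E 2 u w" by (rule w2)
      fix k assume k: "walk_len V E k u w"
      show "2 \<le> k"
      proof (rule ccontr)
        assume "\<not> 2 \<le> k"
        then have "k = 0 \<or> k = Suc 0" by auto
        moreover have "\<not> walk_len V E 0 u w" using uw by simp
        moreover have "\<not> walk_len V E (Suc 0) u w" using w1 False by blast
        ultimately show False using k by metis
      qed
    qed
    then show ?thesis using False by (simp add: V_def E_def)
  qed
qed

lemma no_conflict:
  fixes m n :: nat
  assumes m3: "3 \<le> m" and n3: "3 \<le> n"
    and res: "resolving ({0..<m}\<times>{0..<n}) (tensor_adj K_adj K_adj) W"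
    and u: "u \<in> {0..<m}\<times>{0..<n}" and v: "v \<in> {0..<m}\<times>{0..<n}"
    and uW: "u \<notin> W" and vW: "v \<notin> W"
    and sh: "\<forall>w\<in>W. ((fst u = fst w \<or> snd u = snd w) \<longleftrightarrow> (fst v = fst w \<or> snd v = snd w))"
  shows "u = v"
proof -
  have WV: "W \<subseteq> {0..<m}\<times>{0..<n}" using res unfolding resolving_def by (rule conjunct1)
  have "\<forall>w\<in>W. dist ({0..<m}\<times>{0..<n}) (tensor_adj K_adj K_adj) u w
              = dist ({0..<m}\<times>{0..<n}) (tensor_adj K_adj K_adj) v w"
  proof
    fix w assume wW: "w \<in> W"
    have wV: "w \<in> {0..<m}\<times>{0..<n}" using WV wW by blast
    have uw: "u \<noteq> w" using uW wW by blast
    have vw: "v \<noteq> w" using vW wW by blast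
    have eqc: "(fst u \<noteq> fst w \<and> snd u \<noteq> snd w) = (fst v \<noteq> fst w \<and> snd v \<noteq> snd w)"
      using bspec[OF sh wW] by blast
    show "dist ({0..<m}\<times>{0..<n}) (tensor_adj K_adj K_adj) u w
              = dist ({0..<m}\<times>{0..<n}) (tensor_adj K_adj K_adj) v w"
      unfolding dist_eq[OF m3 n3 u wV uw] dist_eq[OF m3 n3 v wV vw] eqc by (rule refl)
  qed
  moreover have "\<forall>u\<in>{0..<m}\<times>{0..<n}. \<forall>v\<in>{0..<m}\<times>{0..<n}.
      (\<forall>w\<in>W. dist ({0..<m}\<times>{0..<n}) (tensor_adj K_adj K_adj) u w
              = dist ({0..<m}\<times>{0..<n}) (tensor_adj K_adj K_adj) v w) \<longrightarrow> u = v"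
    using res unfolding resolving_def by (rule conjunct2)
  ultimately show ?thesis using u v by (meson bspec mp)
qed

lemma fib:
  assumes fin: "finite W"
  shows "card {w\<in>W. P (card {v\<in>W. f v = f w})}
       = (\<Sum>x\<in>f ` {w\<in>W. P (card {v\<in>W. f v = f w})}. card {v\<in>W. f v = x})"
proof -
  define S where "S = {w\<in>W. P (card {v\<in>W. f v = f w})}"
  have finS: "finite S" using fin by (simp add: S_def)
  have g: "(\<Sum>x\<in>f ` S. sum (\<lambda>_. 1::nat) {w\<in>S. f w = x}) = sum (\<lambda>_. 1) S"
    by (rule sum.group[OF finS finite_imageI[OF finS] subset_refl])
  have "card S = (\<Sum>x\<in>f ` S. card {w\<in>S. f w = x})"
    unfolding card_eq_sum using g by simp
  also have "\<dots> = (\<Sum>x\<in>f ` S. card {v\<in>W. f v = x})"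
  proof (rule sum.cong)
    fix x assume "x \<in> f ` S"
    then have "{w\<in>S. f w = x} = {v\<in>W. f v = x}" by (auto simp: S_def)
    then show "card {w\<in>S. f w = x} = card {v\<in>W. f v = x}" by simp
  qed simp
  finally show ?thesis by (simp add: S_def)
qed

lemma half_count:
  assumes fin: "finite W"
  shows "2 * card (f ` W) \<le> 2 * card {w\<in>W. card {v\<in>W. f v = f w} = 1}
            + card {w\<in>W. 2 \<le> card {v\<in>W. f v = f w}}"
proof -
  define S1 where "S1 = {w\<in>W. card {v\<in>W. f v = f w} = 1}"
  define S2 where "S2 = {w\<in>W. 2 \<le> card {v\<in>W. f v = f w}}"
  have pos: "\<And>w. w \<in> W \<Longrightarrow> 1 \<le> card {v\<in>W. f v = f w}"
  proof -
    fix w assume "w \<in> W"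
    then have "{v\<in>W. f v = f w} \<noteq> {}" by blast
    then show "1 \<le> card {v\<in>W. f v = f w}" using fin
      by (simp add: Suc_le_eq card_gt_0_iff)
  qed
  have "f ` W = f ` S1 \<union> f ` S2"
  proof
    show "f ` W \<subseteq> f ` S1 \<union> f ` S2"
    proof
      fix x assume "x \<in> f ` W"
      then obtain w where w: "w \<in> W" "x = f w" by blast
      have "card {v\<in>W. f v = f w} = 1 \<or> 2 \<le> card {v\<in>W. f v = f w}" using pos[OF w(1)] by linarith
      then show "x \<in> f ` S1 \<union> f ` S2" using w by (auto simp: S1_def S2_def)
    qed
  qed (auto simp: S1_def S2_def)
  then have A: "card (f ` W) \<le> card (f ` S1) + card (f ` S2)" by (metis card_Un_le)
  have B: "card S1 = card (f ` S1)"
  proof -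
    have "card S1 = (\<Sum>x\<in>f ` S1. card {v\<in>W. f v = x})"
      unfolding S1_def by (rule fib[OF fin])
    also have "\<dots> = (\<Sum>x\<in>f ` S1. 1)"
      by (rule sum.cong) (auto simp: S1_def)
    finally show ?thesis by simp
  qed
  have C: "2 * card (f ` S2) \<le> card S2"
  proof -
    have "card S2 = (\<Sum>x\<in>f ` S2. card {v\<in>W. f v = x})"
      unfolding S2_def by (rule fib[OF fin])
    also have "\<dots> \<ge> (\<Sum>x\<in>f ` S2. 2)"
      by (rule sum_mono) (auto simp: S2_def)
    finally show ?thesis by simp
  qed
  show ?thesis unfolding S1_def[symmetric] S2_def[symmetric] using A B C by linarith
qed

lemma split_card:
  assumes fin: "finite W"
  shows "card {w\<in>W. card {v\<in>W. f v = f w} = 1} + card {w\<in>W. 2 \<le> card {v\<in>W. f v = f w}} \<le> card W"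
proof -
  have "card {w\<in>W. card {v\<in>W. f v = f w} = 1} + card {w\<in>W. 2 \<le> card {v\<in>W. f v = f w}}
     = card ({w\<in>W. card {v\<in>W. f v = f w} = 1} \<union> {w\<in>W. 2 \<le> card {v\<in>W. f v = f w}})"
    by (rule card_Un_disjoint[symmetric]) (use fin in auto)
  also have "\<dots> \<le> card W" by (rule card_mono[OF fin]) auto
  finally show ?thesis .
qed

lemma main_count:
  assumes fin: "finite W"
  shows "2 * (card (fst ` W) + card (snd ` W)) \<le> 3 * card W +
     card {w\<in>W. card {v\<in>W. fst v = fst w} = 1 \<and> card {v\<in>W. snd v = snd w} = 1}"
proof -
  define S1 where "S1 = {w\<in>W. card {v\<in>W. fst v = fst w} = 1}"
  define T1 where "T1 = {w\<in>W. card {v\<in>W. snd v = snd w} = 1}"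
  have a: "2 * card (fst ` W) \<le> card S1 + card W"
    using half_count[OF fin, of fst] split_card[OF fin, of fst] by (simp add: S1_def)
  have b: "2 * card (snd ` W) \<le> card T1 + card W"
    using half_count[OF fin, of snd] split_card[OF fin, of snd] by (simp add: T1_def)
  have "card S1 + card T1 = card (S1 \<union> T1) + card (S1 \<inter> T1)"
    by (rule card_Un_Int) (use fin in \<open>auto simp: S1_def T1_def\<close>)
  moreover have "card (S1 \<union> T1) \<le> card W" by (rule card_mono[OF fin]) (auto simp: S1_def T1_def)
  moreover have "S1 \<inter> T1 = {w\<in>W. card {v\<in>W. fst v = fst w} = 1 \<and> card {v\<in>W. snd v = snd w} = 1}"
    by (auto simp: S1_def T1_def)
  ultimately show ?thesis using a b by simp
qed

lemma card1_unique:
  assumes "finite W" "card {v\<in>W. f v = x} = 1" "w \<in> W" "f w = x" "w' \<in> W" "f w' = x"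
  shows "w = w'"
proof -
  have "card {v\<in>W. f v = x} \<le> Suc 0" using assms(2) by simp
  then show ?thesis using assms card_le_Suc0_iff_eq[of "{v\<in>W. f v = x}"] by auto
qed

theorem lemma3p5:
  fixes m n :: nat
  assumes "m \<ge> 3" and "m \<le> n" and "n \<le> 2 * m - 2"
  shows "metric_dim (tensor_verts (K_verts m) (K_verts n)) (tensor_adj K_adj K_adj)
           \<ge> nat (ceiling ((2 / 3 :: real) * (real m + real n - 2)))"
proof -
  have m3: "3 \<le> m" using assms by simp
  have n3: "3 \<le> n" using assms by simp
  define V where "V = {0..<m}\<times>{0..<n}"
  define E where "E = tensor_adj K_adj K_adj"
  have VV: "tensor_verts (K_verts m) (K_verts n) = V"
    by (simp add: tensor_verts_def K_verts_def V_def)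
  have bound: "2 * (m + n) \<le> 3 * card W + 4" if res: "resolving V E W" for W
  proof -
    have WV: "W \<subseteq> V" using res by (simp add: resolving_def)
    have fin: "finite W" using WV finite_subset by (auto simp: V_def)
    have nc: "\<And>u v. u \<in> V \<Longrightarrow> v \<in> V \<Longrightarrow> u \<notin> W \<Longrightarrow> v \<notin> W \<Longrightarrow>
       \<forall>w\<in>W. ((fst u = fst w \<or> snd u = snd w) \<longleftrightarrow> (fst v = fst w \<or> snd v = snd w)) \<Longrightarrow> u = v"
      using no_conflict[OF m3 n3] res by (simp add: V_def E_def)
    define LL where "LL = {w\<in>W. card {v\<in>W. fst v = fst w} = 1 \<and> card {v\<in>W. snd v = snd w} = 1}"
    have mc: "2 * (card (fst ` W) + card (snd ` W)) \<le> 3 * card W + card LL"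
      using main_count[OF fin] by (simp add: LL_def)
    have rows: "\<And>a a'. a < m \<Longrightarrow> a' < m \<Longrightarrow> a \<notin> fst ` W \<Longrightarrow> a' \<notin> fst ` W \<Longrightarrow> a = a'"
    proof -
      fix a a' assume h: "a < m" "a' < m" "a \<notin> fst ` W" "a' \<notin> fst ` W"
      have "(a, 0::nat) = (a', 0)"
        by (rule nc) (use h n3 in \<open>auto simp: V_def image_iff\<close>)
      then show "a = a'" by simp
    qed
    have cols: "\<And>b b'. b < n \<Longrightarrow> b' < n \<Longrightarrow> b \<notin> snd ` W \<Longrightarrow> b' \<notin> snd ` W \<Longrightarrow> b = b'"
    proof -
      fix b b' assume h: "b < n" "b' < n" "b \<notin> snd ` W" "b' \<notin> snd ` W"
      have "(0::nat, b) = (0, b')"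
        by (rule nc) (use h m3 in \<open>auto simp: V_def image_iff\<close>)
      then show "b = b'" by simp
    qed
    have fW: "fst ` W \<subseteq> {0..<m}" and sW: "snd ` W \<subseteq> {0..<n}" using WV by (auto simp: V_def)
    have p: "m \<le> card (fst ` W) + 1"
    proof -
      have "card ({0..<m} - fst ` W) \<le> Suc 0"
        using rows by (subst card_le_Suc0_iff_eq) auto
      moreover have "card ({0..<m} - fst ` W) = m - card (fst ` W)"
        using card_Diff_subset[OF finite_imageI[OF fin] fW] by simp
      ultimately show ?thesis by simp
    qed
    have q: "n \<le> card (snd ` W) + 1"
    proof -
      have "card ({0..<n} - snd ` W) \<le> Suc 0"
        using cols by (subst card_le_Suc0_iff_eq) auto
      moreover have "card ({0..<n} - snd ` W) = n - card (snd ` W)"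
        using card_Diff_subset[OF finite_imageI[OF fin] sW] by simp
      ultimately show ?thesis by simp
    qed
    have LL1: "card LL \<le> 1"
    proof -
      have "\<forall>x\<in>LL. \<forall>y\<in>LL. x = y"
      proof (intro ballI)
        fix x y assume x: "x \<in> LL" and y: "y \<in> LL"
        obtain a b where ab: "x = (a,b)" by fastforce
        obtain a' b' where ab': "y = (a',b')" by fastforce
        have xW: "x \<in> W" and yW: "y \<in> W" using x y by (auto simp: LL_def)
        have rx: "\<And>w. w \<in> W \<Longrightarrow> fst w = a \<Longrightarrow> w = x"
          using card1_unique[OF fin, of fst a] x xW ab by (auto simp: LL_def)
        have cx: "\<And>w. w \<in> W \<Longrightarrow> snd w = b \<Longrightarrow> w = x"
          using card1_unique[OF fin, of snd b] x xW ab by (auto simp: LL_def)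
        have ry: "\<And>w. w \<in> W \<Longrightarrow> fst w = a' \<Longrightarrow> w = y"
          using card1_unique[OF fin, of fst a'] y yW ab' by (auto simp: LL_def)
        have cy: "\<And>w. w \<in> W \<Longrightarrow> snd w = b' \<Longrightarrow> w = y"
          using card1_unique[OF fin, of snd b'] y yW ab' by (auto simp: LL_def)
        show "x = y"
        proof (rule ccontr)
          assume ne: "x \<noteq> y"
          have "a \<noteq> a'" using ry[OF xW] ne ab ab' by auto
          have "b \<noteq> b'" using cy[OF xW] ne ab ab' by auto
          have n1: "(a,b') \<notin> W" using rx ab ab' \<open>b \<noteq> b'\<close> by fastforce
          have n2: "(a',b) \<notin> W" using ry ab ab' \<open>b \<noteq> b'\<close> by fastforce
          have V1: "(a,b') \<in> V" "(a',b) \<in> V" using xW yW WV ab ab' by (auto simp: V_def)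
          have "(a,b') = (a',b)"
          proof (rule nc[OF V1 n1 n2], intro ballI)
            fix w assume wW: "w \<in> W"
            show "(fst (a,b') = fst w \<or> snd (a,b') = snd w) \<longleftrightarrow> (fst (a',b) = fst w \<or> snd (a',b) = snd w)"
            proof -
              obtain c d where cd: "w = (c,d)" by fastforce
              have h1: "c = a \<Longrightarrow> c = a \<and> d = b" using rx[OF wW] cd ab by auto
              have h2: "d = b \<Longrightarrow> c = a \<and> d = b" using cx[OF wW] cd ab by auto
              have h3: "c = a' \<Longrightarrow> c = a' \<and> d = b'" using ry[OF wW] cd ab' by auto
              have h4: "d = b' \<Longrightarrow> c = a' \<and> d = b'" using cy[OF wW] cd ab' by auto
              show ?thesis unfolding cd fst_conv snd_conv using h1 h2 h3 h4 by blast
            qed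
          qed
          then show False using \<open>a \<noteq> a'\<close> by simp
        qed
      qed
      moreover have "finite LL" using fin by (simp add: LL_def)
      ultimately show ?thesis using card_le_Suc0_iff_eq[of LL] by simp
    qed
    have LL0: "card LL = 0" if er: "card (fst ` W) + 1 = m" and ec: "card (snd ` W) + 1 = n"
    proof (rule ccontr)
      assume "card LL \<noteq> 0"
      then obtain x where x: "x \<in> LL" by (metis card.empty ex_in_conv)
      obtain a b where ab: "x = (a,b)" by fastforce
      have xW: "x \<in> W" using x by (auto simp: LL_def)
      have rx: "\<And>w. w \<in> W \<Longrightarrow> fst w = a \<Longrightarrow> w = x"
        using card1_unique[OF fin, of fst a] x xW ab by (auto simp: LL_def)
      have cx: "\<And>w. w \<in> W \<Longrightarrow> snd w = b \<Longrightarrow> w = x"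
        using card1_unique[OF fin, of snd b] x xW ab by (auto simp: LL_def)
      have "fst ` W \<noteq> {0..<m}"
      proof
        assume "fst ` W = {0..<m}"
        then have "card (fst ` W) = m" by simp
        then show False using er by simp
      qed
      then obtain a'0 where a'0: "a'0 \<in> {0..<m}" "a'0 \<notin> fst ` W" using fW by blast
      then obtain a' where a': "a' < m" "a' \<notin> fst ` W" by auto
      have "snd ` W \<noteq> {0..<n}"
      proof
        assume "snd ` W = {0..<n}"
        then have "card (snd ` W) = n" by simp
        then show False using ec by simp
      qed
      then obtain b'0 where b'0: "b'0 \<in> {0..<n}" "b'0 \<notin> snd ` W" using sW by blast
      then obtain b' where b': "b' < n" "b' \<notin> snd ` W" by auto
      have "a \<noteq> a'" using a' xW ab by force
      have n1: "(a',b) \<notin> W" using a' by force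
      have n2: "(a,b') \<notin> W" using b' by force
      have V1: "(a',b) \<in> V" "(a,b') \<in> V" using xW WV ab a' b' by (auto simp: V_def)
      have "(a',b) = (a,b')"
      proof (rule nc[OF V1 n1 n2], intro ballI)
        fix w assume wW: "w \<in> W"
        obtain c d where cd: "w = (c,d)" by fastforce
        have "c \<noteq> a'" "d \<noteq> b'" using a' b' wW cd by force+
        moreover have h1: "c = a \<Longrightarrow> c = a \<and> d = b" using rx[OF wW] cd ab by auto
        moreover have h2: "d = b \<Longrightarrow> c = a \<and> d = b" using cx[OF wW] cd ab by auto
        ultimately show "(fst (a',b) = fst w \<or> snd (a',b) = snd w) \<longleftrightarrow> (fst (a,b') = fst w \<or> snd (a,b') = snd w)"
          unfolding cd fst_conv snd_conv by blast
      qed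
      then show False using \<open>a \<noteq> a'\<close> by simp
    qed
    show ?thesis
    proof (cases "card (fst ` W) + 1 = m \<and> card (snd ` W) + 1 = n")
      case True
      then show ?thesis using mc LL0 by auto
    next
      case False
      then show ?thesis using mc LL1 p q by auto
    qed
  qed
  have ex: "\<exists>k W. finite W \<and> card W = k \<and> resolving V E W"
  proof -
    have "resolving V E V"
    proof -
      have "\<forall>u\<in>V. \<forall>v\<in>V. (\<forall>w\<in>V. dist V E u w = dist V E v w) \<longrightarrow> u = v"
      proof (intro ballI impI)
        fix u v assume u: "u \<in> V" and v: "v \<in> V" and h: "\<forall>w\<in>V. dist V E u w = dist V E v w"
        have d0: "dist V E u u = 0" unfolding dist_def using u by (intro Least_equality) auto
        show "u = v"
        proof (rule ccontr)
          assume "u \<noteq> v"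
          then have "dist V E v u \<noteq> 0" using dist_eq[OF m3 n3, of v u] u v
            by (auto simp: V_def E_def)
          then show False using h u d0 by auto
        qed
      qed
      then show ?thesis by (simp add: resolving_def)
    qed
    moreover have "finite V" by (simp add: V_def)
    ultimately show ?thesis by blast
  qed
  have "nat (ceiling ((2 / 3 :: real) * (real m + real n - 2))) \<le> metric_dim V E"
    unfolding metric_dim_def
  proof (rule LeastI2_ex[OF ex])
    fix k assume "\<exists>W. finite W \<and> card W = k \<and> resolving V E W"
    then obtain W where W: "card W = k" "resolving V E W" by blast
    have "2 * (m + n) \<le> 3 * k + 4" using bound[OF W(2)] W(1) by simp
    then have "real (2 * (m + n)) \<le> real (3 * k + 4)" by linarith
    then have "(2 / 3 :: real) * (real m + real n - 2) \<le> real k" by simp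
    then have "ceiling ((2 / 3 :: real) * (real m + real n - 2)) \<le> int k"
      by (simp add: ceiling_le_iff)
    then show "nat (ceiling ((2 / 3 :: real) * (real m + real n - 2))) \<le> k" by (simp only: nat_le_iff)
  qed
  then show ?thesis using VV by (simp add: E_def)
qed

end
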